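(* A word $w$ over $\{a,b\}$ is good if and only if $w=\epsilon$ or there exist integers $n,e,i,f$ with $e\ge0$, $0\le i,f\le n$, and ($e=0 \Rightarrow n=\max(i,f)$), such that $w=a^i(ba^n)^eba^f$ or $w=b^i(ab^n)^eab^f$.
   Context: Let $E$ be the morphism exchanging $a$ and $b$, and $\tilde w$ the mirror image (reversal) of $w$. A word $w$ over $\{a,b\}$ is bad if one of $w,\tilde w,E(w),E(\tilde w)$ has a factor of the form $a^kb^h$ with $k,h\ge 2$, or of the form $a^kba^lb^m$ with $k>l\ge 1$, $m\ge1$; $w$ is good if it is not bad. $\epsilon$ denotes the empty word. *)

theory Defs
  imports Main "HOL-Library.Sublist"
begin

datatype letter = a | b

type_synonym word = "letter list"

fun exch :: "letter \<Rightarrow> letter" where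
  "exch a = b" | "exch b = a"

definition E :: "word \<Rightarrow> word" where
  "E w = map exch w"

definition factor :: "word \<Rightarrow> word \<Rightarrow> bool" where
  "factor u w \<longleftrightarrow> sublist u w"

definition has_bad_factor :: "word \<Rightarrow> bool" where
  "has_bad_factor w \<longleftrightarrow>
     (\<exists>k h. k \<ge> 2 \<and> h \<ge> 2 \<and> factor (replicate k a @ replicate h b) w) \<or>
     (\<exists>k l m. k > l \<and> l \<ge> 1 \<and> m \<ge> 1 \<and>
        factor (replicate k a @ [b] @ replicate l a @ replicate m b) w)"

definition bad :: "word \<Rightarrow> bool" where
  "bad w \<longleftrightarrow> has_bad_factor w \<or> has_bad_factor (rev w) \<or>
               has_bad_factor (E w) \<or> has_bad_factor (E (rev w))"

definition good :: "word \<Rightarrow> bool" where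
  "good w \<longleftrightarrow> \<not> bad w"

end

theory Submission
  imports Defs
begin


lemma sub_trans: "sublist x y \<Longrightarrow> sublist y z \<Longrightarrow> sublist x z"
  using sublist_order.order.trans by blast

lemma sub_map: "sublist u w \<Longrightarrow> sublist (map f u) (map f w)"
  unfolding sublist_def by (metis map_append)

lemma EE[simp]: "E (E w) = w"
proof -
  have "exch (exch x) = x" for x by (cases x) auto
  then show ?thesis by (simp add: E_def map_idI)
qed

lemma E_rev: "E (rev w) = rev (E w)" by (simp add: E_def rev_map)
lemma E_app[simp]: "E (u @ v) = E u @ E v" by (simp add: E_def)
lemma E_Cons[simp]: "E (x # v) = exch x # E v" by (simp add: E_def)
lemma E_Nil[simp]: "E [] = []" by (simp add: E_def)
lemma E_rep[simp]: "E (replicate n x) = replicate n (exch x)" by (simp add: E_def)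
lemma E_eq: "E = map exch" by (rule ext) (simp add: E_def)
lemma E_concat[simp]: "E (concat xs) = concat (map E xs)" by (simp add: E_eq map_concat)

lemma hbf_sub: "sublist u w \<Longrightarrow> has_bad_factor u \<Longrightarrow> has_bad_factor w"
  unfolding has_bad_factor_def factor_def by (meson sub_trans)

lemma sub_E: "sublist u w \<Longrightarrow> sublist (E u) (E w)"
  unfolding E_def by (rule sub_map)

lemma bad_sub: "sublist u w \<Longrightarrow> bad u \<Longrightarrow> bad w"
  unfolding bad_def
  by (meson hbf_sub sub_E sublist_rev)

lemma bad_E: "bad (E w) \<longleftrightarrow> bad w"
  unfolding bad_def by (auto simp: E_rev)

lemma good_E: "good (E w) \<longleftrightarrow> good w"
  unfolding good_def using bad_E by blast

definition pat1 :: "nat \<Rightarrow> word" where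
  "pat1 l = replicate (Suc l) a @ b # replicate l a @ [b]"

lemma hbf_reduce: "has_bad_factor w \<Longrightarrow> sublist [a,a,b,b] w \<or> (\<exists>l\<ge>1. sublist (pat1 l) w)"
proof -
  assume "has_bad_factor w"
  then consider (1) k h where "k \<ge> 2" "h \<ge> 2" "sublist (replicate k a @ replicate h b) w"
    | (2) k l m where "k > l" "l \<ge> 1" "m \<ge> 1" "sublist (replicate k a @ [b] @ replicate l a @ replicate m b) w"
    unfolding has_bad_factor_def factor_def by blast
  then show ?thesis
  proof cases
    case 1
    obtain k' h' where kh: "k = k' + 2" "h = 2 + h'" using 1 le_Suc_ex
      by (metis add.commute)
    have "replicate k a @ replicate h b = replicate k' a @ [a,a,b,b] @ replicate h' b"
      unfolding kh replicate_add by (simp add: numeral_2_eq_2)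
    then have "sublist [a,a,b,b] (replicate k a @ replicate h b)" by (metis sublist_appendI)
    then show ?thesis using 1 sub_trans by blast
  next
    case 2
    have "replicate k a @ [b] @ replicate l a @ replicate m b = replicate (k - Suc l) a @ pat1 l @ replicate (m-1) b"
    proof -
      have "replicate k a = replicate (k - Suc l) a @ replicate (Suc l) a"
      proof -
        have "k = (k - Suc l) + Suc l" using 2 by simp
        then show ?thesis by (metis replicate_add)
      qed
      moreover have "replicate m b = b # replicate (m-1) b" using 2
        by (simp flip: replicate_Suc)
      ultimately show ?thesis by (simp add: pat1_def)
    qed
    then have "sublist (pat1 l) (replicate k a @ [b] @ replicate l a @ replicate m b)" by (metis sublist_appendI)
    then show ?thesis using 2 sub_trans by blast
  qed
qed


lemma bad_reduce: "bad w \<Longrightarrow> sublist [a,a,b,b] w \<or> sublist [b,b,a,a] w \<or>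
  (\<exists>l\<ge>1. sublist (pat1 l) w \<or> sublist (rev (pat1 l)) w \<or> sublist (E (pat1 l)) w \<or> sublist (E (rev (pat1 l))) w)"
proof -
  assume "bad w"
  then consider "has_bad_factor w" | "has_bad_factor (rev w)" | "has_bad_factor (E w)" | "has_bad_factor (E (rev w))"
    unfolding bad_def by blast
  then show ?thesis
  proof cases
    case 1 then show ?thesis using hbf_reduce by blast
  next
    case 2 then show ?thesis using hbf_reduce[of "rev w"] by (auto simp: sublist_rev_right)
  next
    case 3
    have r: "sublist q (E w) \<Longrightarrow> sublist (E q) w" for q using sub_E[of q "E w"] by simp
    show ?thesis using hbf_reduce[OF 3] r[of "[a,a,b,b]"] r[of "pat1 _"] by auto
  next
    case 4
    have r: "sublist q (E (rev w)) \<Longrightarrow> sublist (rev (E q)) w" for q using sub_E[of q "E (rev w)"]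
      by (simp add: sublist_rev_right)
    show ?thesis using hbf_reduce[OF 4] r[of "[a,a,b,b]"] r[of "pat1 _"] by (auto simp: E_rev)
  qed
qed

definition W :: "nat \<Rightarrow> nat \<Rightarrow> word" where
  "W n m = replicate n a @ concat (replicate m (b # replicate n a))"

lemma concat_rep_Suc: "concat (replicate (Suc m) x) = concat (replicate m x) @ x"
  by (induct m) auto

lemma W_Suc: "W n (Suc m) = W n m @ b # replicate n a"
  unfolding W_def by (simp only: concat_rep_Suc) simp

lemma W_len: "length (W n m) = n + m * (n+1)"
  unfolding W_def by (induct m) auto

lemma W_nth: "k < length (W n m) \<Longrightarrow> W n m ! k = (if k mod (n+1) = n then b else a)"
proof (induct m arbitrary: k)
  case 0
  then have "k < n" by (simp add: W_def)
  then show ?case by (simp add: W_def)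
next
  case (Suc m)
  show ?case
  proof (cases "k < length (W n m)")
    case True
    then have "W n (Suc m) ! k = W n m ! k" unfolding W_Suc by (simp add: nth_append)
    then show ?thesis using Suc True by simp
  next
    case False
    define j where "j = k - length (W n m)"
    have kj: "k = j + n + m * (n+1)" using False unfolding j_def W_len by simp
    have jn: "j \<le> n" using Suc.prems kj by (simp add: W_Suc W_len)
    have Wk: "W n (Suc m) ! k = (b # replicate n a) ! j"
      unfolding W_Suc j_def using False by (simp add: nth_append)
    have km: "k mod (n+1) = (j + n) mod (n+1)" unfolding kj by (rule mod_mult_self1)
    show ?thesis
    proof (cases j)
      case 0
      then show ?thesis using km Wk by simp
    next
      case (Suc j')
      have "j + n = j' + (n+1)" using Suc by simp
      then have "(j + n) mod (n+1) = j' mod (n+1)" by (metis mod_add_self2)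
      then have "(j + n) mod (n+1) = j'" using Suc jn by simp
      then show ?thesis using km Wk Suc jn by simp
    qed
  qed
qed

lemma W_alt: "W n m = concat (replicate m (replicate n a @ [b])) @ replicate n a"
  unfolding W_def by (induct m) auto

lemma W_rev: "rev (W n m) = W n m"
proof -
  have "rev (W n m) = concat (map rev (replicate m (b # replicate n a))) @ replicate n a"
    unfolding W_def by (simp add: rev_concat rev_map)
  also have "\<dots> = W n m" unfolding W_alt by (simp add: map_replicate)
  finally show ?thesis .
qed

lemma sub_pos: "sublist p w \<Longrightarrow> \<exists>s. s + length p \<le> length w \<and> (\<forall>j<length p. w!(s+j) = p!j)"
proof -
  assume "sublist p w"
  then obtain u v where "w = u @ p @ v" unfolding sublist_def by blast
  then show ?thesis by (intro exI[of _ "length u"]) (auto simp: nth_append)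
qed

lemma W0: "W 0 m = replicate m b"
  unfolding W_def by (induct m) auto

lemma W_no_bb: "n \<ge> 1 \<Longrightarrow> \<not> sublist [b,b] (W n m)"
proof
  assume n: "n \<ge> 1" and "sublist [b,b] (W n m)"
  then obtain s where s: "s + length [b,b] \<le> length (W n m)" "\<forall>j<length [b,b]. W n m!(s+j) = [b,b]!j"
    using sub_pos by blast
  have l1: "s < length (W n m)" "Suc s < length (W n m)" using s(1) by simp_all
  have "W n m ! s = b" using s(2)[rule_format, of 0] by simp
  then have m1: "s mod (n+1) = n" using W_nth[OF l1(1)] by (cases "s mod (n+1) = n") auto
  have "W n m ! Suc s = b" using s(2)[rule_format, of 1] by simp
  then have m2: "Suc s mod (n+1) = n" using W_nth[OF l1(2)] by (cases "Suc s mod (n+1) = n") auto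
  have "Suc s mod (n+1) = 0" using m1 by (simp add: mod_Suc)
  then show False using m2 n by simp
qed

lemma pat1_nth: "pat1 l ! Suc l = b" "pat1 l ! (Suc l + Suc l) = b" "j \<le> l \<Longrightarrow> pat1 l ! j = a"
  "length (pat1 l) = Suc l + Suc l + 1"
  unfolding pat1_def by (auto simp: nth_append simp del: replicate_Suc)

lemma W_no_pat1: "\<not> sublist (pat1 l) (W n m)"
proof
  assume "sublist (pat1 l) (W n m)"
  then obtain s where s: "s + length (pat1 l) \<le> length (W n m)" "\<forall>j<length (pat1 l). W n m!(s+j) = pat1 l!j"
    using sub_pos by blast
  define N where "N = n + 1"
  define x where "x = s + Suc l"
  have x_lt: "x < length (W n m)" using s(1) pat1_nth(4) unfolding x_def by simp
  have "W n m ! x = b" using s(2)[rule_format, of "Suc l"] pat1_nth(1,4) unfolding x_def by simp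
  then have m1: "x mod N = n" using W_nth[OF x_lt] unfolding N_def by (cases "x mod (n+1) = n") auto
  have x_lt2: "x + Suc l < length (W n m)" using s(1) pat1_nth(4) unfolding x_def by simp
  have "W n m ! (x + Suc l) = b" using s(2)[rule_format, of "Suc l + Suc l"] pat1_nth(2,4) unfolding x_def
    by (simp add: add.assoc)
  then have m2: "(x + Suc l) mod N = n" using W_nth[OF x_lt2] unfolding N_def by (cases "(x + Suc l) mod (n+1) = n") auto
  have "x mod N = (x + Suc l) mod N" using m1 m2 by simp
  then have "N dvd (x + Suc l) - x" using mod_eq_dvd_iff_nat[of x "x + Suc l" N] by simp
  then have "N dvd Suc l" by simp
  then have NL: "N \<le> Suc l" by (rule dvd_imp_le) simp
  define j where "j = Suc l - N"
  have jl: "j \<le> l" unfolding j_def N_def by simp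
  have "s + j + N = x" unfolding j_def x_def using NL by simp
  then have mj: "(s + j) mod N = n" using m1 by (metis mod_add_self2)
  have j_lt: "s + j < length (W n m)" using s(1) jl pat1_nth(4) by simp
  have "W n m ! (s+j) = a" using s(2)[rule_format, of j] jl pat1_nth(3,4) by simp
  moreover have "W n m ! (s+j) = b" using W_nth[OF j_lt] mj unfolding N_def by simp
  ultimately show False by simp
qed

lemma good_W: "good (W n m)"
  unfolding good_def
proof
  assume bad: "bad (W n m)"
  show False
  proof (cases "n = 0")
    case True
    have na: "\<not> sublist q (W n m)" if "a \<in> set q" for q
    proof
      assume "sublist q (W n m)"
      then have "set q \<subseteq> set (replicate m b)" using set_mono_sublist[of q "W n m"] True W0 by simp
      moreover have "a \<notin> set (replicate m b)" by simp
      ultimately show False using that by blast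
    qed
    have p1: "a \<in> set (pat1 l)" for l by (simp add: pat1_def)
    have p2: "a \<in> set (E (pat1 l))" for l by (simp add: pat1_def)
    show False using bad_reduce[OF bad]
    proof (elim disjE exE conjE)
      assume "sublist [a,a,b,b] (W n m)" then show False using na[of "[a,a,b,b]"] by simp
    next
      assume "sublist [b,b,a,a] (W n m)" then show False using na[of "[b,b,a,a]"] by simp
    next
      fix l assume "sublist (pat1 l) (W n m)" then show False using na p1 by blast
    next
      fix l assume "sublist (rev (pat1 l)) (W n m)" then show False using na[of "rev (pat1 l)"] p1[of l] by simp
    next
      fix l assume "sublist (E (pat1 l)) (W n m)" then show False using na p2 by blast
    next
      fix l assume "sublist (E (rev (pat1 l))) (W n m)" then show False using na[of "E (rev (pat1 l))"] p2[of l] by (simp add: E_rev)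
    qed
  next
    case False
    have nbb: "\<not> sublist q (W n m)" if "sublist [b,b] q" for q
    proof
      assume "sublist q (W n m)"
      then have "sublist [b,b] (W n m)" using sub_trans[OF that] by blast
      moreover have "n \<ge> 1" using False by simp
      ultimately show False using W_no_bb by blast
    qed
    have e1: "sublist [b,b] (E (pat1 l))" if l1: "l \<ge> 1" for l
    proof -
      obtain l' where "l = Suc l'" using l1 by (cases l) auto
      then have "E (pat1 l) = [] @ [b,b] @ (replicate l' b @ a # replicate l b @ [a])"
        by (simp add: pat1_def)
      then show ?thesis by (metis sublist_appendI)
    qed
    have e2: "sublist [b,b] (E (rev (pat1 l)))" if "l \<ge> 1" for l
      using e1[OF that] by (simp add: E_rev sublist_rev_right)
    have r: "\<not> sublist (rev (pat1 l)) (W n m)" for l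
      using W_no_pat1[of l n m] W_rev[of n m] by (metis sublist_rev)
    have q1: "sublist [b,b] [a,a,b,b]" using sublist_appendI[of "[b,b]" "[a,a]" "[]"] by simp
    have q2: "sublist [b,b] [b,b,a,a]" using sublist_appendI[of "[b,b]" "[]" "[a,a]"] by simp
    show False using bad_reduce[OF bad]
    proof (elim disjE exE conjE)
      assume "sublist [a,a,b,b] (W n m)" then show False using nbb q1 by blast
    next
      assume "sublist [b,b,a,a] (W n m)" then show False using nbb q2 by blast
    next
      fix l assume "sublist (pat1 l) (W n m)" then show False using W_no_pat1 by blast
    next
      fix l assume "sublist (rev (pat1 l)) (W n m)" then show False using r by blast
    next
      fix l assume "l \<ge> 1" "sublist (E (pat1 l)) (W n m)" then show False using nbb e1 by blast
    next
      fix l assume "l \<ge> 1" "sublist (E (rev (pat1 l))) (W n m)" then show False using nbb e2 by blast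
    qed
  qed
qed


lemma good_sub: "sublist u w \<Longrightarrow> good w \<Longrightarrow> good u"
  unfolding good_def using bad_sub by blast

definition F1 :: "nat \<Rightarrow> nat \<Rightarrow> nat \<Rightarrow> nat \<Rightarrow> word" where
  "F1 n e i f = replicate i a @ concat (replicate e (b # replicate n a)) @ b # replicate f a"

definition form1 :: "word \<Rightarrow> bool" where
  "form1 w \<longleftrightarrow> (\<exists>n e i f. i \<le> n \<and> f \<le> n \<and> (e = 0 \<longrightarrow> n = max i f) \<and> w = F1 n e i f)"

lemma F1_sub_W: "i \<le> n \<Longrightarrow> f \<le> n \<Longrightarrow> sublist (F1 n e i f) (W n (Suc e))"
proof -
  assume i: "i \<le> n" and f: "f \<le> n"
  have r1: "replicate n a = replicate (n-i) a @ replicate i a"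
  proof -
    have "n = (n - i) + i" using i by simp
    then show ?thesis by (metis replicate_add)
  qed
  have r2: "replicate n a = replicate f a @ replicate (n-f) a"
  proof -
    have "n = f + (n - f)" using f by simp
    then show ?thesis by (metis replicate_add)
  qed
  have "W n (Suc e) = replicate n a @ concat (replicate e (b # replicate n a)) @ b # replicate n a"
    unfolding W_def concat_rep_Suc by simp
  also have "\<dots> = replicate (n-i) a @ F1 n e i f @ replicate (n-f) a"
  proof -
    have "replicate n a @ concat (replicate e (b # replicate n a)) @ b # replicate n a
      = (replicate (n-i) a @ replicate i a) @ concat (replicate e (b # replicate n a)) @ b # (replicate f a @ replicate (n-f) a)"
      by (simp only: r1[symmetric] r2[symmetric])
    then show ?thesis by (simp add: F1_def)
  qed
  finally show ?thesis by (metis sublist_appendI)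
qed

lemma form1_good: "form1 w \<Longrightarrow> good w"
proof -
  assume "form1 w"
  then obtain n e i f where "i \<le> n" "f \<le> n" "w = F1 n e i f" unfolding form1_def by blast
  then have "sublist w (W n (Suc e))" using F1_sub_W by simp
  then show ?thesis using good_sub good_W by blast
qed

lemma EF1: "E (F1 n e i f) = replicate i b @ concat (replicate e (a # replicate n b)) @ a # replicate f b"
  by (simp add: F1_def map_replicate)

lemma hbfA: "k > l \<Longrightarrow> l \<ge> 1 \<Longrightarrow> has_bad_factor (replicate k a @ [b] @ replicate l a @ [b])"
  unfolding has_bad_factor_def factor_def
  apply (rule disjI2)
  apply (rule exI[of _ k], rule exI[of _ l], rule exI[of _ 1])
  by simp

lemma hbfB: "k \<ge> 2 \<Longrightarrow> has_bad_factor (replicate k a @ [b,b])"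
  unfolding has_bad_factor_def factor_def
  apply (rule disjI1)
  apply (rule exI[of _ k], rule exI[of _ 2])
  by (simp add: numeral_2_eq_2)

lemma bad1: "sublist u w \<Longrightarrow> has_bad_factor u \<Longrightarrow> \<not> good w"
  unfolding good_def bad_def using hbf_sub by blast

lemma bad2: "sublist (rev u) w \<Longrightarrow> has_bad_factor u \<Longrightarrow> \<not> good w"
proof -
  assume s: "sublist (rev u) w" and h: "has_bad_factor u"
  have "sublist u (rev w)" using s by (simp add: sublist_rev_right)
  then show ?thesis unfolding good_def bad_def using hbf_sub h by blast
qed

lemma bad4: "sublist (rev (E u)) w \<Longrightarrow> has_bad_factor u \<Longrightarrow> \<not> good w"
proof -
  assume s: "sublist (rev (E u)) w" and h: "has_bad_factor u"
  have "sublist (E u) (rev w)" using s by (simp add: sublist_rev_right)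
  then have "sublist u (E (rev w))" using sub_E[of "E u" "rev w"] by simp
  then show ?thesis unfolding good_def bad_def using hbf_sub h by blast
qed

lemma crep_Suc: "concat (replicate (Suc e) x) = concat (replicate e x) @ x"
  by (rule concat_rep_Suc)

lemma step:
  assumes fw: "form1 w" and g: "good (w @ [c])"
  shows "form1 (w @ [c]) \<or> form1 (E (w @ [c]))"
proof -
  obtain n e i f where p: "i \<le> n" "f \<le> n" "e = 0 \<longrightarrow> n = max i f" and w: "w = F1 n e i f"
    using fw unfolding form1_def by (elim exE conjE)
  define x where "x = b # replicate n a"
  define P where "P = concat (replicate e x)"
  have wP: "w = replicate i a @ P @ b # replicate f a" unfolding w F1_def P_def x_def by simp
  show ?thesis
  proof (cases c)
    case a
    show ?thesis
    proof (cases "f < n")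
      case True
      have "w @ [c] = F1 n e i (Suc f)" unfolding w F1_def a by (simp add: replicate_append_same)
      moreover have "e = 0 \<longrightarrow> n = max i (Suc f)" using p True by auto
      ultimately show ?thesis unfolding form1_def using p True
        by (intro disjI1 exI[of _ n] exI[of _ e] exI[of _ i] exI[of _ "Suc f"]) auto
    next
      case False
      then have fn: "f = n" using p by simp
      show ?thesis
      proof (cases e)
        case 0
        have "w @ [c] = F1 (Suc n) 0 i (Suc n)" unfolding w F1_def a 0 fn by (simp add: replicate_append_same)
        then show ?thesis unfolding form1_def using p
          by (intro disjI1 exI[of _ "Suc n"] exI[of _ 0] exI[of _ i] exI[of _ "Suc n"]) auto
      next
        case (Suc e')
        show ?thesis
        proof (cases "n = 0")
          case True
          have i0: "i = 0" using p True by simp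
          have Pe: "P = replicate e b" unfolding P_def x_def True by (induct e) auto
          have "E (w @ [c]) = F1 (Suc e) 0 (Suc e) 0"
            unfolding wP Pe F1_def i0 a using fn True by (simp add: replicate_append_same)
          then show ?thesis unfolding form1_def
            by (intro disjI2 exI[of _ "Suc e"] exI[of _ 0] exI[of _ "Suc e"] exI[of _ 0]) auto
        next
          case False
          define P' where "P' = concat (replicate e' x)"
          have "w @ [c] = (replicate i a @ P') @ rev (replicate (Suc n) a @ [b] @ replicate n a @ [b]) @ []"
            unfolding wP P_def P'_def Suc crep_Suc x_def fn a by (simp add: replicate_append_same)
          then have "sublist (rev (replicate (Suc n) a @ [b] @ replicate n a @ [b])) (w @ [c])"
            by (metis sublist_appendI)
          moreover have "has_bad_factor (replicate (Suc n) a @ [b] @ replicate n a @ [b])"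
            using hbfA[of n "Suc n"] False by simp
          ultimately have "\<not> good (w @ [c])" by (rule bad2)
          then show ?thesis using g by (rule notE)
        qed
      qed
    qed
  next
    case b
    show ?thesis
    proof (cases "f = n")
      case True
      have "w @ [c] = F1 n (Suc e) i 0" unfolding wP F1_def P_def crep_Suc x_def b True by simp
      then show ?thesis unfolding form1_def using p
        by (intro disjI1 exI[of _ n] exI[of _ "Suc e"] exI[of _ i] exI[of _ 0]) auto
    next
      case False
      then have fn: "f < n" using p by simp
      show ?thesis
      proof (cases "f \<ge> 1")
        case f1: True
        show ?thesis
        proof (cases e)
          case 0
          then have "n = i" using p fn by auto
          then have "w @ [c] = [] @ (replicate n a @ [b] @ replicate f a @ [b]) @ []"
            unfolding wP P_def 0 b by simp
          then have "sublist (replicate n a @ [b] @ replicate f a @ [b]) (w @ [c])" by (metis sublist_appendI)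
          then have "\<not> good (w @ [c])" by (rule bad1[OF _ hbfA[OF fn f1]])
          then show ?thesis using g by (rule notE)
        next
          case (Suc e')
          have "w @ [c] = (replicate i a @ concat (replicate e' x) @ [b]) @ (replicate n a @ [b] @ replicate f a @ [b]) @ []"
            unfolding wP P_def Suc crep_Suc x_def b by simp
          then have "sublist (replicate n a @ [b] @ replicate f a @ [b]) (w @ [c])" by (metis sublist_appendI)
          then have "\<not> good (w @ [c])" by (rule bad1[OF _ hbfA[OF fn f1]])
          then show ?thesis using g by (rule notE)
        qed
      next
        case False
        then have f0: "f = 0" by simp
        show ?thesis
        proof (cases "n \<ge> 2")
          case n2: True
          show ?thesis
          proof (cases e)
            case 0
            then have "n = i" using p f0 by auto
            then have "w @ [c] = [] @ (replicate n a @ [b, b]) @ []"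
              unfolding wP P_def 0 b f0 by simp
            then have "sublist (replicate n a @ [b,b]) (w @ [c])" by (metis sublist_appendI)
            then have "\<not> good (w @ [c])" by (rule bad1[OF _ hbfB[OF n2]])
            then show ?thesis using g by (rule notE)
          next
            case (Suc e')
            have "w @ [c] = (replicate i a @ concat (replicate e' x) @ [b]) @ (replicate n a @ [b,b]) @ []"
              unfolding wP P_def Suc crep_Suc x_def b f0 by simp
            then have "sublist (replicate n a @ [b,b]) (w @ [c])" by (metis sublist_appendI)
            then have "\<not> good (w @ [c])" by (rule bad1[OF _ hbfB[OF n2]])
            then show ?thesis using g by (rule notE)
          qed
        next
          case False
          then have n1: "n = 1" using fn f0 by simp
          have hb: "has_bad_factor [a,a,b,a,b]" using hbfA[of 1 2] by (simp add: numeral_2_eq_2)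
          have re: "rev (E [a,a,b,a,b]) = [a,b,a,b,b]" by simp
          show ?thesis
          proof (cases e)
            case 0
            then have "i = 1" using p f0 n1 by auto
            then have "E (w @ [c]) = F1 2 0 0 2"
              unfolding wP P_def 0 b f0 F1_def by (simp add: numeral_2_eq_2)
            then show ?thesis unfolding form1_def
              by (intro disjI2 exI[of _ 2] exI[of _ 0] exI[of _ 0] exI[of _ 2]) auto
          next
            case (Suc e')
            show ?thesis
            proof (cases e')
              case 0
              show ?thesis
              proof (cases i)
                case 0
                have "E (w @ [c]) = F1 2 0 1 2"
                  unfolding wP P_def Suc \<open>e' = 0\<close> 0 b f0 F1_def x_def n1 by (simp add: numeral_2_eq_2)
                then show ?thesis unfolding form1_def
                  by (intro disjI2 exI[of _ 2] exI[of _ 0] exI[of _ 1] exI[of _ 2]) auto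
              next
                case (Suc i')
                then have i1: "i = 1" using p n1 by simp
                have "w @ [c] = [] @ rev (E [a,a,b,a,b]) @ []"
                  unfolding wP P_def \<open>e = Suc e'\<close> \<open>e' = 0\<close> b f0 x_def n1 i1 by simp
                then have "sublist (rev (E [a,a,b,a,b])) (w @ [c])" by (metis sublist_appendI)
                then have "\<not> good (w @ [c])" by (rule bad4[OF _ hb])
                then show ?thesis using g by (rule notE)
              qed
            next
              case (Suc e'')
              have "w @ [c] = (replicate i a @ concat (replicate e'' x) @ [b]) @ rev (E [a,a,b,a,b]) @ []"
                unfolding wP P_def \<open>e = Suc e'\<close> Suc crep_Suc x_def b f0 n1 by simp
              then have "sublist (rev (E [a,a,b,a,b])) (w @ [c])" by (metis sublist_appendI)
              then have "\<not> good (w @ [c])" by (rule bad4[OF _ hb])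
                then show ?thesis using g by (rule notE)
            qed
          qed
        qed
      qed
    qed
  qed
qed

lemma fwd: "good w \<Longrightarrow> w = [] \<or> form1 w \<or> form1 (E w)"
proof (induct w rule: rev_induct)
  case Nil then show ?case by simp
next
  case (snoc c xs)
  have "sublist xs (xs @ [c])" by (rule sublist_append_rightI)
  then have gxs: "good xs" using good_sub snoc.prems by blast
  from snoc.hyps[OF gxs] consider "xs = []" | "form1 xs" | "form1 (E xs)" by blast
  then show ?case
  proof cases
    case 1
    have fb: "form1 [b]" unfolding form1_def F1_def
      by (intro exI[of _ 0] exI[of _ 0] exI[of _ 0] exI[of _ 0]) simp
    show ?thesis
    proof (cases c)
      case a
      have "E (xs @ [c]) = [b]" using 1 a by simp
      then show ?thesis using fb by simp
    next
      case b
      have "xs @ [c] = [b]" using 1 b by simp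
      then show ?thesis using fb by simp
    qed
  next
    case 2 
    have "form1 (xs @ [c]) \<or> form1 (E (xs @ [c]))" by (rule step[OF 2 snoc.prems])
    then show ?thesis by blast
  next
    case 3
    have e1: "E xs @ [exch c] = E (xs @ [c])" by simp
    have "good (E (xs @ [c]))" using snoc.prems good_E by blast
    then have "good (E xs @ [exch c])" by (simp only: e1)
    then have "form1 (E xs @ [exch c]) \<or> form1 (E (E xs @ [exch c]))" by (rule step[OF 3])
    then have "form1 (E (xs @ [c])) \<or> form1 (xs @ [c])" by (simp only: e1 EE)
    then show ?thesis by blast
  qed
qed

theorem lemma10:
  fixes w :: word
  shows "good w \<longleftrightarrow>
    w = [] \<or>
    (\<exists>n e i f :: nat. i \<le> n \<and> f \<le> n \<and> (e = 0 \<longrightarrow> n = max i f) \<and>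
       (w = replicate i a @ concat (replicate e (b # replicate n a)) @ b # replicate f a \<or>
        w = replicate i b @ concat (replicate e (a # replicate n b)) @ a # replicate f b))"
  (is "_ \<longleftrightarrow> w = [] \<or> (\<exists>n e i f. ?P n e i f)")
proof
  assume g: "good w"
  from fwd[OF g] show "w = [] \<or> (\<exists>n e i f. ?P n e i f)"
  proof (elim disjE)
    assume "w = []" then show ?thesis by (rule disjI1)
  next
    assume "form1 w"
    then obtain n e i f where p: "i \<le> n" "f \<le> n" "e = 0 \<longrightarrow> n = max i f" and we: "w = F1 n e i f"
      unfolding form1_def by (elim exE conjE)
    have eq: "w = replicate i a @ concat (replicate e (b # replicate n a)) @ b # replicate f a"
      using we by (simp add: F1_def)
    have "?P n e i f" using p eq by (intro conjI disjI1)
    then show ?thesis by (intro disjI2 exI)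
  next
    assume "form1 (E w)"
    then obtain n e i f where p: "i \<le> n" "f \<le> n" "e = 0 \<longrightarrow> n = max i f" and we: "E w = F1 n e i f"
      unfolding form1_def by (elim exE conjE)
    have "w = E (F1 n e i f)" using we EE[of w] by simp
    then have eq: "w = replicate i b @ concat (replicate e (a # replicate n b)) @ a # replicate f b"
      by (simp only: EF1)
    have "?P n e i f" using p eq by (intro conjI disjI2)
    then show ?thesis by (intro disjI2 exI)
  qed
next
  assume H: "w = [] \<or> (\<exists>n e i f. ?P n e i f)"
  show "good w"
  proof (cases "w = []")
    case True
    have "sublist [] (W 0 0)" by simp
    then show ?thesis using True good_sub good_W by blast
  next
    case False
    then have "\<exists>n e i f. ?P n e i f" using H by (simp only: simp_thms)
    then obtain n e i f where P: "?P n e i f" by (elim exE)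
    note p = conjunct1[OF P] conjunct1[OF conjunct2[OF P]] conjunct1[OF conjunct2[OF conjunct2[OF P]]]
    note disj = conjunct2[OF conjunct2[OF conjunct2[OF P]]]
    from disj show ?thesis
    proof
      assume "w = replicate i a @ concat (replicate e (b # replicate n a)) @ b # replicate f a"
      then have "w = F1 n e i f" by (simp add: F1_def)
      then have "form1 w" unfolding form1_def using p
        by (intro exI[of _ n] exI[of _ e] exI[of _ i] exI[of _ f]) simp
      then show ?thesis by (rule form1_good)
    next
      assume "w = replicate i b @ concat (replicate e (a # replicate n b)) @ a # replicate f b"
      then have "w = E (F1 n e i f)" by (simp only: EF1)
      then have "E w = F1 n e i f" by simp
      then have "form1 (E w)" unfolding form1_def using p
        by (intro exI[of _ n] exI[of _ e] exI[of _ i] exI[of _ f]) simp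
      then have "good (E w)" by (rule form1_good)
      then show ?thesis using good_E by blast
    qed
  qed
qed

end
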